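(* Let $\Omega\subset V_0$ be open, let $f\colon\Omega\to\mathbb{R}$ be continuous and suppose $\Gamma_f$ is a ruled surface. Let $R_1,R_2$ be distinct rulings of $\Gamma_f$, and for $i=1,2$ let $I_i\subset\mathbb{R}$ and $g_{R_i}\colon I_i\to\mathbb{R}$ be such that $\Pi(R_i)=\{(x,0,g_{R_i}(x)):x\in I_i\}$. Then either $g_{R_1}(x)\le g_{R_2}(x)$ for all $x\in I_1\cap I_2$, or $g_{R_1}(x)\ge g_{R_2}(x)$ for all $x\in I_1\cap I_2$.
   Context: $\mathbb{H}$ is $\mathbb{R}^3$ with product $(x,y,z)\cdot(x',y',z')=(x+x',y+y',z+z'+\frac{xy'-yx'}{2})$; $Y^t=(0,t,0)$. A horizontal line is a set $\{p\cdot tv:t\in\mathbb{R}\}$, $v=(a,b,0)\neq0$; a ruled surface is a union of horizontal line segments (rulings) with endpoints in its boundary. $V_0=\{(x,0,z)\}$; for $f\colon\Omega\to\mathbb{R}$, $\Gamma_f=\{u\cdot Y^{f(u)}:u\in\Omega\}$. The intrinsic projection is $\Pi(x,y,z)=(x,0,z-\frac{xy}{2})$ (the projection of a horizontal segment not parallel to $Y$ is the graph of a quadratic function of $x$). *)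

theory Defs
  imports "HOL-Analysis.Analysis"
begin

type_synonym heis = "real \<times> real \<times> real"

definition hmul :: "heis \<Rightarrow> heis \<Rightarrow> heis" where
  "hmul p q = (case p of (x, y, z) \<Rightarrow> case q of (x', y', z') \<Rightarrow>
      (x + x', y + y', z + z' + (x * y' - y * x') / 2))"

definition Yt :: "real \<Rightarrow> heis" where
  "Yt t = (0, t, 0)"

definition V0 :: "heis set" where
  "V0 = {(x, y, z). y = 0}"

definition intrinsic_graph :: "heis set \<Rightarrow> (heis \<Rightarrow> real) \<Rightarrow> heis set" where
  "intrinsic_graph \<Omega> f = {hmul u (Yt (f u)) | u. u \<in> \<Omega>}"

definition intr_proj :: "heis \<Rightarrow> heis" where
  "intr_proj p = (case p of (x, y, z) \<Rightarrow> (x, 0, z - x * y / 2))"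

definition horizontal_segment :: "heis \<Rightarrow> real \<times> real \<Rightarrow> real set \<Rightarrow> heis set" where
  "horizontal_segment p v J = (\<lambda>t. hmul p (t * fst v, t * snd v, 0)) ` J"

definition is_ruling :: "heis set \<Rightarrow> heis set \<Rightarrow> bool" where
  "is_ruling S R \<longleftrightarrow> (\<exists>p v J. v \<noteq> (0, 0) \<and> open J \<and> is_interval J \<and> J \<noteq> {} \<and>
      R = horizontal_segment p v J \<and> R \<subseteq> S \<and>
      (\<forall>c \<in> closure J - J. hmul p (c * fst v, c * snd v, 0) \<in> closure S - S))"

definition ruled_surface :: "heis set \<Rightarrow> bool" where
  "ruled_surface S \<longleftrightarrow> S = \<Union>{R. is_ruling S R}"

end

theory Submission
  imports Defs
begin

lemma seg_proj:
  "intr_proj (hmul (x0,y0,z0) (t*a, t*b, 0)) =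
     (x0 + t*a, 0, z0 + t*(x0*b - y0*a)/2 - (x0+t*a)*(y0+t*b)/2)"
  by (simp add: hmul_def intr_proj_def algebra_simps)

lemma seg_y:
  "fst (snd (hmul (x0,y0,z0) (t*a, t*b, 0))) = y0 + t*b"
  by (simp add: hmul_def)

lemma proj_graph_pt:
  assumes "u \<in> V0" shows "intr_proj (hmul u (Yt c)) = u"
  using assms by (cases u) (auto simp: V0_def hmul_def Yt_def intr_proj_def)

lemma graph_inj:
  assumes "\<Omega> \<subseteq> V0" "q \<in> intrinsic_graph \<Omega> f" "q' \<in> intrinsic_graph \<Omega> f"
    "intr_proj q = intr_proj q'"
  shows "q = q'"
proof -
  obtain u where u: "u \<in> \<Omega>" "q = hmul u (Yt (f u))" using assms(2) by (auto simp: intrinsic_graph_def)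
  obtain u' where u': "u' \<in> \<Omega>" "q' = hmul u' (Yt (f u'))" using assms(3) by (auto simp: intrinsic_graph_def)
  have "u = u'" using assms(1,4) u u' proj_graph_pt by (metis subsetD)
  then show ?thesis using u u' by simp
qed

lemma ruling_graph:
  assumes R: "R = (\<lambda>t. hmul (x1,y1,z1) (t*a1,t*b1,0)) ` J" and a1: "a1 \<noteq> 0"
    and P: "intr_proj ` R = {(x,0,g x)|x. x\<in>I}"
  shows "x \<in> I \<longleftrightarrow> (x-x1)/a1 \<in> J"
    and "x \<in> I \<Longrightarrow> g x = z1 + ((x-x1)/a1)*(x1*b1 - y1*a1)/2 - x*(y1+((x-x1)/a1)*b1)/2"
proof -
  have A: "(\<exists>t\<in>J. x = x1 + t*a1 \<and> g x = z1 + t*(x1*b1 - y1*a1)/2 - (x1+t*a1)*(y1+t*b1)/2)"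
    if "x \<in> I" for x
  proof -
    have "(x,0,g x) \<in> intr_proj ` R" unfolding P using that by blast
    then obtain r where "r \<in> R" and req: "(x,0,g x) = intr_proj r" by (rule imageE)
    from \<open>r \<in> R\<close> obtain t where "t \<in> J" and rt: "r = hmul (x1,y1,z1) (t*a1,t*b1,0)"
      unfolding R by (rule imageE)
    from req have e: "(x,0::real,g x) = (x1 + t*a1, 0, z1 + t*(x1*b1 - y1*a1)/2 - (x1+t*a1)*(y1+t*b1)/2)"
      unfolding rt by (rule trans[OF _ seg_proj])
    have "x = x1 + t*a1 \<and> g x = z1 + t*(x1*b1 - y1*a1)/2 - (x1+t*a1)*(y1+t*b1)/2"
      using e[unfolded prod.inject] by blast
    then show ?thesis using \<open>t \<in> J\<close> by blast
  qed
  show "x \<in> I \<longleftrightarrow> (x-x1)/a1 \<in> J"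
  proof
    assume "x \<in> I"
    then obtain t where "t\<in>J" "x = x1 + t*a1" using A by blast
    then show "(x-x1)/a1 \<in> J" using a1 by simp
  next
    assume h: "(x-x1)/a1 \<in> J"
    define t where "t = (x-x1)/a1"
    have "hmul (x1,y1,z1) (t*a1,t*b1,0) \<in> R" using R h unfolding t_def by blast
    then have "intr_proj (hmul (x1,y1,z1) (t*a1,t*b1,0)) \<in> intr_proj ` R" by (rule imageI)
    then have "intr_proj (hmul (x1,y1,z1) (t*a1,t*b1,0)) \<in> {(x,0,g x)|x. x\<in>I}"
      by (simp only: P)
    then have "(x1 + t*a1, 0::real, z1 + t*(x1*b1 - y1*a1)/2 - (x1+t*a1)*(y1+t*b1)/2) \<in> {(x,0,g x)|x. x\<in>I}"
      by (simp only: seg_proj)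
    then obtain x' where "x' \<in> I" "x1 + t*a1 = x'" by blast
    moreover have "x1 + t*a1 = x" using a1 t_def by simp
    ultimately show "x \<in> I" by simp
  qed
  assume "x \<in> I"
  from A[OF this] obtain t where tx: "x = x1 + t*a1"
    and tg: "g x = z1 + t*(x1*b1 - y1*a1)/2 - (x1+t*a1)*(y1+t*b1)/2" by blast
  have tv: "t = (x-x1)/a1" using a1 tx by simp
  have "x1 + t*a1 = x" using tx by simp
  then have "g x = z1 + t*(x1*b1 - y1*a1)/2 - x*(y1+t*b1)/2" using tg by simp
  then show "g x = z1 + ((x-x1)/a1)*(x1*b1 - y1*a1)/2 - x*(y1+((x-x1)/a1)*b1)/2"
    unfolding tv .
qed

lemma ruling_deg:
  assumes R: "R = (\<lambda>t. hmul (x1,y1,z1) (t*a1,t*b1,0)) ` J" and a1: "a1 = 0"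
    and P: "intr_proj ` R = {(x,0,g x)|x. x\<in>I}" and "x \<in> I"
  shows "x = x1"
proof -
  have "(x,0,g x) \<in> intr_proj ` R" using P assms(4) by auto
  then obtain t where "(x,0,g x) = intr_proj (hmul (x1,y1,z1) (t*a1,t*b1,0))"
    using R by auto
  then show ?thesis unfolding seg_proj using a1 by simp
qed

lemma between_interval:
  fixes J :: "real set"
  assumes "is_interval J" "(a-x1)/a1 \<in> J" "(b-x1)/a1 \<in> J" "(c-a)*(b-c) \<ge> 0" "a1 \<noteq> 0"
  shows "(c-x1)/a1 \<in> J"
proof -
  define ta where "ta = (a-x1)/a1"
  define tb where "tb = (b-x1)/a1"
  define tc where "tc = (c-x1)/a1"
  have e1: "tc - ta = (c-a)/a1" unfolding ta_def tc_def by (simp add: diff_divide_distrib)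
  have e2: "tb - tc = (b-c)/a1" unfolding tb_def tc_def by (simp add: diff_divide_distrib)
  have "(tc-ta)*(tb-tc) = (c-a)*(b-c)/(a1*a1)" unfolding e1 e2 by simp
  also have "\<dots> \<ge> 0" using assms(4) by simp
  finally have "(tc-ta)*(tb-tc) \<ge> 0" .
  then have d: "(0 \<le> tc-ta \<and> 0 \<le> tb-tc) \<or> (tc-ta \<le> 0 \<and> tb-tc \<le> 0)"
    by (simp only: zero_le_mult_iff)
  have iv: "\<And>u w x. u \<in> J \<Longrightarrow> w \<in> J \<Longrightarrow> u \<le> x \<Longrightarrow> x \<le> w \<Longrightarrow> x \<in> J"
    using assms(1) unfolding is_interval_1 by blast
  have ta: "ta \<in> J" and tb: "tb \<in> J" using assms(2,3) ta_def tb_def by auto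
  from d have "tc \<in> J"
  proof
    assume h: "0 \<le> tc-ta \<and> 0 \<le> tb-tc"
    show ?thesis by (rule iv[OF ta tb]) (use h in linarith)+
  next
    assume h: "tc-ta \<le> 0 \<and> tb-tc \<le> 0"
    show ?thesis by (rule iv[OF tb ta]) (use h in linarith)+
  qed
  then show ?thesis using tc_def by simp
qed

lemma F_expand:
  fixes a1 b1 c x x1 y1 z1 :: real
  assumes "a1 \<noteq> 0"
  shows "z1 + ((x-x1)/a1)*(x1*b1 - y1*a1)/2 - x*(y1+((x-x1)/a1)*b1)/2 =
    (z1 + ((c-x1)/a1)*(x1*b1 - y1*a1)/2 - c*(y1+((c-x1)/a1)*b1)/2)
    - (y1 + ((c-x1)/a1)*b1)*(x-c) - (b1/a1)*(x-c)^2/2"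
  using assms by (simp add: field_simps power2_eq_square)

theorem lemma2p1:
  fixes \<Omega> :: "heis set" and f :: "heis \<Rightarrow> real"
    and R1 R2 :: "heis set" and I1 I2 :: "real set" and g1 g2 :: "real \<Rightarrow> real"
  assumes "\<Omega> \<subseteq> V0" and "openin (top_of_set V0) \<Omega>"
    and "continuous_on \<Omega> f"
    and "ruled_surface (intrinsic_graph \<Omega> f)"
    and "is_ruling (intrinsic_graph \<Omega> f) R1" and "is_ruling (intrinsic_graph \<Omega> f) R2"
    and "R1 \<noteq> R2"
    and "intr_proj ` R1 = {(x, 0, g1 x) | x. x \<in> I1}"
    and "intr_proj ` R2 = {(x, 0, g2 x) | x. x \<in> I2}"
  shows "(\<forall>x \<in> I1 \<inter> I2. g1 x \<le> g2 x) \<or> (\<forall>x \<in> I1 \<inter> I2. g1 x \<ge> g2 x)"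
proof (rule ccontr)
  define S where "S = intrinsic_graph \<Omega> f"
  assume "\<not> ?thesis"
  then obtain a b where ab: "a \<in> I1" "a \<in> I2" "b \<in> I1" "b \<in> I2" "g1 a > g2 a" "g1 b < g2 b"
    by (auto simp: not_le)
  obtain p1 v1 J1 where r1: "is_interval J1" "R1 = horizontal_segment p1 v1 J1" "R1 \<subseteq> S"
    using assms(5) unfolding is_ruling_def S_def by blast
  obtain x1 y1 z1 where p1: "p1 = (x1,y1,z1)" by (cases p1) auto
  obtain a1 b1 where v1: "v1 = (a1,b1)" by (cases v1) auto
  have R1: "R1 = (\<lambda>t. hmul (x1,y1,z1) (t*a1,t*b1,0)) ` J1"
    using r1(2) p1 v1 by (simp add: horizontal_segment_def)
  obtain p2 v2 J2 where r2: "is_interval J2" "R2 = horizontal_segment p2 v2 J2" "R2 \<subseteq> S"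
    using assms(6) unfolding is_ruling_def S_def by blast
  obtain x2 y2 z2 where p2: "p2 = (x2,y2,z2)" by (cases p2) auto
  obtain a2 b2 where v2: "v2 = (a2,b2)" by (cases v2) auto
  have R2: "R2 = (\<lambda>t. hmul (x2,y2,z2) (t*a2,t*b2,0)) ` J2"
    using r2(2) p2 v2 by (simp add: horizontal_segment_def)
  have a1: "a1 \<noteq> 0"
  proof
    assume "a1 = 0"
    then have "a = x1" "b = x1" using ruling_deg[OF R1 _ assms(8)] ab by auto
    then show False using ab by simp
  qed
  have a2: "a2 \<noteq> 0"
  proof
    assume "a2 = 0"
    then have "a = x2" "b = x2" using ruling_deg[OF R2 _ assms(9)] ab by auto
    then show False using ab by simp
  qed
  define F1 where "F1 = (\<lambda>x. z1 + ((x-x1)/a1)*(x1*b1 - y1*a1)/2 - x*(y1+((x-x1)/a1)*b1)/2)"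
  define F2 where "F2 = (\<lambda>x. z2 + ((x-x2)/a2)*(x2*b2 - y2*a2)/2 - x*(y2+((x-x2)/a2)*b2)/2)"
  have memI1: "x \<in> I1 \<longleftrightarrow> (x-x1)/a1 \<in> J1" for x using ruling_graph(1)[OF R1 a1 assms(8)] .
  have memI2: "x \<in> I2 \<longleftrightarrow> (x-x2)/a2 \<in> J2" for x using ruling_graph(1)[OF R2 a2 assms(9)] .
  have gF1: "x \<in> I1 \<Longrightarrow> g1 x = F1 x" for x using ruling_graph(2)[OF R1 a1 assms(8)] F1_def by simp
  have gF2: "x \<in> I2 \<Longrightarrow> g2 x = F2 x" for x using ruling_graph(2)[OF R2 a2 assms(9)] F2_def by simp
  define D where "D = (\<lambda>x. F1 x - F2 x)"
  have Da: "D a > 0" using ab gF1 gF2 D_def by simp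
  have Db: "D b < 0" using ab gF1 gF2 D_def by simp
  have contD: "continuous_on A D" for A
    unfolding D_def F1_def F2_def using a1 a2 by (intro continuous_intros) auto
  obtain c where c: "D c = 0" "(c-a)*(b-c) \<ge> 0"
  proof (cases "a \<le> b")
    case True
    then obtain c where "a \<le> c" "c \<le> b" "D c = 0"
      using IVT2'[of D b 0 a, OF _ _ True contD] Da Db by auto
    then show ?thesis using that by simp
  next
    case False
    then obtain c where "b \<le> c" "c \<le> a" "D c = 0"
      using IVT'[of D b 0 a, OF _ _ _ contD] Da Db by auto
    then show ?thesis using that[of c] by (simp add: mult_nonpos_nonpos)
  qed
  define t1 where "t1 = (c-x1)/a1"
  define t2 where "t2 = (c-x2)/a2"
  have t1J: "t1 \<in> J1" unfolding t1_def
    using between_interval[OF r1(1) _ _ c(2) a1] ab memI1 by blast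
  have t2J: "t2 \<in> J2" unfolding t2_def
    using between_interval[OF r2(1) _ _ c(2) a2] ab memI2 by blast
  define q1 where "q1 = hmul (x1,y1,z1) (t1*a1,t1*b1,0)"
  define q2 where "q2 = hmul (x2,y2,z2) (t2*a2,t2*b2,0)"
  have q1S: "q1 \<in> S" using t1J R1 r1(3) q1_def by blast
  have q2S: "q2 \<in> S" using t2J R2 r2(3) q2_def by blast
  have pq1: "intr_proj q1 = (c, 0, F1 c)" unfolding q1_def seg_proj F1_def t1_def using a1 by simp
  have pq2: "intr_proj q2 = (c, 0, F2 c)" unfolding q2_def seg_proj F2_def t2_def using a2 by simp
  have "F1 c = F2 c" using c(1) D_def by simp
  then have "q1 = q2" using graph_inj[OF assms(1) q1S[unfolded S_def] q2S[unfolded S_def]] pq1 pq2 by simp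
  then have yy: "y1 + t1*b1 = y2 + t2*b2" using seg_y q1_def q2_def by metis
  have Dx: "D x = - (b1/a1 - b2/a2) * (x-c)^2/2" for x
  proof -
    have "D x = (F1 c - (y1 + t1*b1)*(x-c) - (b1/a1)*(x-c)^2/2)
              - (F2 c - (y2 + t2*b2)*(x-c) - (b2/a2)*(x-c)^2/2)"
      unfolding D_def F1_def F2_def t1_def t2_def
      using F_expand[OF a1, of z1 x x1 b1 y1 c] F_expand[OF a2, of z2 x x2 b2 y2 c] by simp
    also have "\<dots> = (F1 c - F2 c) - ((y1+t1*b1) - (y2+t2*b2))*(x-c) - (b1/a1 - b2/a2)*(x-c)^2/2"
      by (simp add: algebra_simps diff_divide_distrib)
    finally have "D x = - ((b1/a1 - b2/a2)*(x-c)^2/2)" using \<open>F1 c = F2 c\<close> yy by simp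
    then show ?thesis by (metis mult_minus_left minus_divide_left)
  qed
  define K where "K = - (b1/a1 - b2/a2)"
  have Ka: "K * (a-c)^2 > 0" using Da Dx[of a] K_def by simp
  have Kb: "K * (b-c)^2 < 0" using Db Dx[of b] K_def by simp
  have s1: "(a-c)^2 \<ge> 0" "(b-c)^2 \<ge> 0" by simp_all
  have "K > 0" using Ka s1(1) unfolding zero_less_mult_iff by linarith
  moreover have "K < 0" using Kb s1(2) unfolding mult_less_0_iff by linarith
  ultimately show False by simp
qed

end
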